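(* Let $G$ be a finite simple graph. Then $\eta(G)$ equals the maximum number of pairwise vertex-disjoint cycles in $G$ (this maximum being $0$ if $G$ is a forest).
   Context: A finite simple graph $G$ is regarded as a simplicial complex of dimension at most $1$. Its face poset $\mathcal{F}(G)$ is the directed graph whose vertices are the vertices and the edges of $G$, with a directed edge $e\to v$ whenever $v$ is an endpoint of the edge $e$ of $G$. A matching on $\mathcal{F}(G)$ is a set $m$ of edges of $\mathcal{F}(G)$, no two of which share an endpoint. Given a matching $m$, let $\mathcal{F}_m(G)$ be the directed graph obtained from $\mathcal{F}(G)$ by reversing the orientation of every edge in $m$; a directed cycle of $\mathcal{F}_m(G)$ (closed directed path with no repeated vertices) is said to be supported by $m$, and $J(m)$ is the number of directed cycles supported by $m$. The matching complex $\mathrm{M}(G)$ is the simplicial complex whose vertex set is the set of edges of $\mathcal{F}(G)$ and whose simplices are the nonempty matchings; $\mathrm{M}_k(G)$ is the subcomplex of simplices (matchings) $m$ with $J(m)\le k$. $\eta(G)$ is the smallest integer $k\ge0$ with $\mathrm{M}_k(G)=\mathrm{M}(G)$. A cycle of $G$ is a subgraph homeomorphic to a circle. *)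

theory Defs
  imports Main
begin

definition simple_graph :: "'a set \<Rightarrow> 'a set set \<Rightarrow> bool" where
  "simple_graph V E \<longleftrightarrow> finite V \<and> (\<forall>e\<in>E. \<exists>u v. u \<in> V \<and> v \<in> V \<and> u \<noteq> v \<and> e = {u, v})"

datatype 'a face = FVert 'a | FEdge "'a set"

definition face_arcs :: "'a set \<Rightarrow> 'a set set \<Rightarrow> ('a face \<times> 'a face) set" where
  "face_arcs V E = {(FEdge e, FVert v) | e v. e \<in> E \<and> v \<in> e}"

definition face_matching :: "'a set \<Rightarrow> 'a set set \<Rightarrow> ('a face \<times> 'a face) set \<Rightarrow> bool" where
  "face_matching V E m \<longleftrightarrow> m \<subseteq> face_arcs V E \<and>
     (\<forall>a\<in>m. \<forall>b\<in>m. a \<noteq> b \<longrightarrow> {fst a, snd a} \<inter> {fst b, snd b} = {})"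

definition reversed_arcs :: "'a set \<Rightarrow> 'a set set \<Rightarrow> ('a face \<times> 'a face) set \<Rightarrow> ('a face \<times> 'a face) set" where
  "reversed_arcs V E m = {(x, y). ((x, y) \<in> face_arcs V E \<and> (x, y) \<notin> m) \<or> (y, x) \<in> m}"

definition is_dcycle :: "('b \<times> 'b) set \<Rightarrow> 'b list \<Rightarrow> bool" where
  "is_dcycle A xs \<longleftrightarrow> xs \<noteq> [] \<and> distinct xs \<and>
     (\<forall>i < length xs. (xs ! i, xs ! (Suc i mod length xs)) \<in> A)"

(* The set of arcs traversed by such a cycle (identifies rotations) *)
definition cycle_arcs :: "'b list \<Rightarrow> ('b \<times> 'b) set" where
  "cycle_arcs xs = {(xs ! i, xs ! (Suc i mod length xs)) | i. i < length xs}"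

definition J :: "'a set \<Rightarrow> 'a set set \<Rightarrow> ('a face \<times> 'a face) set \<Rightarrow> nat" where
  "J V E m = card {cycle_arcs xs | xs. is_dcycle (reversed_arcs V E m) xs}"

(* eta(G): least k with M_k(G) = M(G), i.e. every (nonempty) matching m has J(m) \<le> k *)
definition eta :: "'a set \<Rightarrow> 'a set set \<Rightarrow> nat" where
  "eta V E = (LEAST k. \<forall>m. face_matching V E m \<and> m \<noteq> {} \<longrightarrow> J V E m \<le> k)"

definition graph_cycle :: "'a set \<Rightarrow> 'a set set \<Rightarrow> 'a list \<Rightarrow> bool" where
  "graph_cycle V E xs \<longleftrightarrow> length xs \<ge> 3 \<and> distinct xs \<and> set xs \<subseteq> V \<and>
     (\<forall>i < length xs. {xs ! i, xs ! (Suc i mod length xs)} \<in> E)"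

definition max_disjoint_cycles :: "'a set \<Rightarrow> 'a set set \<Rightarrow> nat" where
  "max_disjoint_cycles V E = Max {k. \<exists>cs. length cs = k \<and> (\<forall>c\<in>set cs. graph_cycle V E c) \<and>
      (\<forall>i < k. \<forall>j < k. i \<noteq> j \<longrightarrow> set (cs ! i) \<inter> set (cs ! j) = {})}"

end

theory Submission
  imports Defs
begin


lemma fa_mem: "(x,y) \<in> face_arcs V E \<longleftrightarrow> (\<exists>e v. x = FEdge e \<and> y = FVert v \<and> e \<in> E \<and> v \<in> e)"
  unfolding face_arcs_def by auto

lemma revA: "(x,y) \<in> reversed_arcs V E m \<longleftrightarrow> ((x,y) \<in> face_arcs V E \<and> (x,y) \<notin> m) \<or> (y,x) \<in> m"
  unfolding reversed_arcs_def by auto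

lemma m_sub: "face_matching V E m \<Longrightarrow> (x,y) \<in> m \<Longrightarrow> (x,y) \<in> face_arcs V E"
  unfolding face_matching_def by auto

lemma m_unique:
  assumes "face_matching V E m" "a \<in> m" "b \<in> m" "fst a = fst b \<or> snd a = snd b \<or> fst a = snd b \<or> snd a = fst b"
  shows "a = b"
  using assms unfolding face_matching_def by blast

lemma A_FVert:
  assumes "face_matching V E m" "(FVert v, y) \<in> reversed_arcs V E m"
  shows "\<exists>e. y = FEdge e \<and> (FEdge e, FVert v) \<in> m"
  using assms m_sub[OF assms(1)] by (auto simp: revA fa_mem)

lemma A_FEdge:
  assumes "face_matching V E m" "(FEdge e, y) \<in> reversed_arcs V E m"
  shows "\<exists>w. y = FVert w \<and> e \<in> E \<and> w \<in> e \<and> (FEdge e, FVert w) \<notin> m"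
  using assms m_sub[OF assms(1), of y "FEdge e"] by (auto simp: revA fa_mem)

lemma A_toFEdge:
  assumes "face_matching V E m" "(x, FEdge e) \<in> reversed_arcs V E m"
  shows "\<exists>v. x = FVert v \<and> (FEdge e, FVert v) \<in> m"
  using assms m_sub[OF assms(1), of "FEdge e" x] by (auto simp: revA fa_mem)

lemma A_det:
  assumes sg: "simple_graph V E" and fm: "face_matching V E m"
    and "(p,x) \<in> reversed_arcs V E m" "(x,y) \<in> reversed_arcs V E m" "(x,y') \<in> reversed_arcs V E m"
  shows "y = y'"
proof (cases x)
  case (FVert v)
  then obtain e e' where "y = FEdge e" "(FEdge e, FVert v) \<in> m" "y' = FEdge e'" "(FEdge e', FVert v) \<in> m"
    using A_FVert[OF fm] assms by metis
  then show ?thesis using m_unique[OF fm, of "(FEdge e, FVert v)" "(FEdge e', FVert v)"] by auto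
next
  case (FEdge e)
  obtain v where v: "p = FVert v" "(FEdge e, FVert v) \<in> m" using A_toFEdge[OF fm] assms FEdge by metis
  obtain w where w: "y = FVert w" "e \<in> E" "w \<in> e" "(FEdge e, FVert w) \<notin> m" using A_FEdge[OF fm] assms FEdge by metis
  obtain w' where w': "y' = FVert w'" "w' \<in> e" "(FEdge e, FVert w') \<notin> m" using A_FEdge[OF fm] assms FEdge by metis
  have "v \<in> e" using m_sub[OF fm v(2)] by (auto simp: fa_mem)
  obtain a b where "e = {a,b}" using sg w(2) unfolding simple_graph_def by blast
  then show ?thesis using w w' v `v \<in> e` by auto
qed



lemma dc_arc: "is_dcycle A xs \<Longrightarrow> i < length xs \<Longrightarrow> (xs!i, xs!(Suc i mod length xs)) \<in> A"
  unfolding is_dcycle_def by auto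

lemma dc_pred: assumes "is_dcycle A xs" "x \<in> set xs" shows "\<exists>p. (p,x) \<in> A"
proof -
  obtain i where i: "i < length xs" "x = xs!i" using assms(2) by (auto simp: in_set_conv_nth)
  let ?n = "length xs"
  have n: "?n > 0" using i by auto
  have "Suc ((i + ?n - 1) mod ?n) mod ?n = Suc (i + ?n - 1) mod ?n" by (simp add: mod_Suc_eq)
  also have "Suc (i + ?n - 1) = i + ?n" using n by simp
  also have "(i + ?n) mod ?n = i" using i by simp
  finally have "Suc ((i + ?n - 1) mod ?n) mod ?n = i" .
  moreover have "(i + ?n - 1) mod ?n < ?n" using n by auto
  ultimately show ?thesis using dc_arc[OF assms(1), of "(i + ?n - 1) mod ?n"] i by metis
qed

definition det_rel :: "('b \<times> 'b) set \<Rightarrow> bool" where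
  "det_rel A \<longleftrightarrow> (\<forall>p x y y'. (p,x) \<in> A \<longrightarrow> (x,y) \<in> A \<longrightarrow> (x,y') \<in> A \<longrightarrow> y = y')"

lemma dc_next_in: assumes "det_rel A" "is_dcycle A ys" "z \<in> set ys" "(z,y) \<in> A"
  shows "y \<in> set ys"
proof -
  obtain j where j: "j < length ys" "z = ys!j" using assms(3) by (auto simp: in_set_conv_nth)
  obtain p where "(p,z) \<in> A" using dc_pred assms by metis
  then have "y = ys!(Suc j mod length ys)" using assms(1,4) dc_arc[OF assms(2) j(1)] j unfolding det_rel_def by metis
  moreover have "length ys > 0" using j by linarith
  then have "Suc j mod length ys < length ys" by simp
  ultimately show ?thesis by simp
qed

lemma dc_char: assumes "det_rel A" "is_dcycle A xs"
  shows "cycle_arcs xs = {(x,y). x \<in> set xs \<and> (x,y) \<in> A}"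
proof
  show "cycle_arcs xs \<subseteq> {(x,y). x \<in> set xs \<and> (x,y) \<in> A}"
    using dc_arc[OF assms(2)] unfolding cycle_arcs_def by auto
next
  show "{(x,y). x \<in> set xs \<and> (x,y) \<in> A} \<subseteq> cycle_arcs xs"
  proof clarify
    fix x y assume "x \<in> set xs" "(x,y) \<in> A"
    obtain j where j: "j < length xs" "x = xs!j" using `x \<in> set xs` by (auto simp: in_set_conv_nth)
    obtain p where "(p,x) \<in> A" using dc_pred assms `x \<in> set xs` by metis
    then have "y = xs!(Suc j mod length xs)" using assms(1) `(x,y) \<in> A` dc_arc[OF assms(2) j(1)] j unfolding det_rel_def by metis
    then show "(x,y) \<in> cycle_arcs xs" using j unfolding cycle_arcs_def by blast
  qed
qed

lemma dc_sub: assumes "det_rel A" "is_dcycle A xs" "is_dcycle A ys" "x \<in> set xs" "x \<in> set ys"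
  shows "set xs \<subseteq> set ys"
proof -
  obtain i where i: "i < length xs" "x = xs!i" using assms(4) by (auto simp: in_set_conv_nth)
  let ?n = "length xs"
  have k: "xs!((i+k) mod ?n) \<in> set ys" for k
  proof (induction k)
    case 0 then show ?case using i assms(5) by simp
  next
    case (Suc k)
    have "?n > 0" using i by linarith
    then have "((i+k) mod ?n) < ?n" by simp
    from dc_arc[OF assms(2) this] have "(xs!((i+k) mod ?n), xs!((i + Suc k) mod ?n)) \<in> A"
      by (simp add: mod_Suc_eq)
    then show ?case using dc_next_in[OF assms(1,3) Suc] by blast
  qed
  show ?thesis
  proof
    fix y assume "y \<in> set xs"
    then obtain i' where i': "i' < ?n" "y = xs!i'" by (auto simp: in_set_conv_nth)
    have "i + (?n - i + i') = i' + ?n" using i by simp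
    then have "(i + (?n - i + i')) mod ?n = i'" using i' by (simp add: mod_less)
    then show "y \<in> set ys" using k[of "?n - i + i'"] i' by simp
  qed
qed

lemma dc_same: assumes "det_rel A" "is_dcycle A xs" "is_dcycle A ys" "x \<in> set xs" "x \<in> set ys"
  shows "cycle_arcs xs = cycle_arcs ys"
  using dc_sub[OF assms] dc_sub[OF assms(1,3,2,5,4)] dc_char[OF assms(1,2)] dc_char[OF assms(1,3)] by auto




lemma dc_rotate1: assumes "is_dcycle A xs" shows "is_dcycle A (rotate1 xs)"
proof -
  let ?n = "length xs"
  have n: "?n > 0" using assms unfolding is_dcycle_def by auto
  have "(rotate1 xs ! i, rotate1 xs ! (Suc i mod ?n)) \<in> A" if i: "i < ?n" for i
  proof -
    have a: "Suc i mod ?n < ?n" using n by simp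
    have "rotate1 xs ! i = xs ! (Suc i mod ?n)" using nth_rotate1 i by blast
    moreover have "rotate1 xs ! (Suc i mod ?n) = xs ! (Suc (Suc i mod ?n) mod ?n)" using nth_rotate1 a by blast
    ultimately show ?thesis using dc_arc[OF assms a] by simp
  qed
  then show ?thesis using assms unfolding is_dcycle_def by simp
qed

definition isV :: "'a face \<Rightarrow> bool" where "isV x = (case x of FVert _ \<Rightarrow> True | FEdge _ \<Rightarrow> False)"
fun vof :: "'a face \<Rightarrow> 'a" where "vof (FVert v) = v" | "vof (FEdge e) = undefined"

lemma isV_step:
  assumes fm: "face_matching V E m" and "(x,y) \<in> reversed_arcs V E m"
  shows "isV y \<longleftrightarrow> \<not> isV x"
proof (cases x)
  case (FVert v) then show ?thesis using A_FVert[OF fm] assms(2) by (fastforce simp: isV_def)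
next
  case (FEdge e) then show ?thesis using A_FEdge[OF fm] assms(2) by (fastforce simp: isV_def)
qed

lemma dc_startV:
  assumes fm: "face_matching V E m" and dc: "is_dcycle (reversed_arcs V E m) xs"
  shows "\<exists>ys. is_dcycle (reversed_arcs V E m) ys \<and> set ys = set xs \<and> isV (ys!0)"
proof (cases "isV (xs!0)")
  case True then show ?thesis using dc by blast
next
  case False
  have n: "length xs > 0" using dc unfolding is_dcycle_def by auto
  have "(xs!0, xs!(Suc 0 mod length xs)) \<in> reversed_arcs V E m" using dc_arc[OF dc n] .
  then have "isV (xs!(Suc 0 mod length xs))" using isV_step[OF fm] False by blast
  moreover have "rotate1 xs ! 0 = xs!(Suc 0 mod length xs)" using nth_rotate1 n by blast
  ultimately show ?thesis using dc_rotate1[OF dc] by auto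
qed

lemma dc_alt:
  assumes fm: "face_matching V E m" and dc: "is_dcycle (reversed_arcs V E m) ys" and v0: "isV (ys!0)"
  shows "\<And>j. j < length ys \<Longrightarrow> isV (ys!j) \<longleftrightarrow> even j" and "even (length ys)"
proof -
  show alt: "isV (ys!j) \<longleftrightarrow> even j" if "j < length ys" for j
    using that
  proof (induction j)
    case 0 then show ?case using v0 by simp
  next
    case (Suc j)
    have "Suc j mod length ys = Suc j" using Suc.prems by simp
    then have "(ys!j, ys!(Suc j)) \<in> reversed_arcs V E m" using dc_arc[OF dc, of j] Suc.prems by simp
    then have "isV (ys!(Suc j)) \<longleftrightarrow> \<not> isV (ys!j)" by (rule isV_step[OF fm])
    moreover have "isV (ys!j) \<longleftrightarrow> even j" using Suc by simp
    ultimately show ?case by simp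
  qed
  let ?n = "length ys"
  have n: "?n > 0" using dc unfolding is_dcycle_def by auto
  have "Suc (?n - 1) mod ?n = 0" using n by simp
  then have "(ys!(?n-1), ys!0) \<in> reversed_arcs V E m" using dc_arc[OF dc, of "?n-1"] n by simp
  then have "isV (ys!0) \<longleftrightarrow> \<not> isV (ys!(?n-1))" by (rule isV_step[OF fm])
  then have "\<not> isV (ys!(?n-1))" using v0 by blast
  moreover have "?n - 1 < ?n" using n by simp
  ultimately have "odd (?n - 1)" using alt by blast
  then show "even ?n" using n by simp
qed




lemma edge_in_V: "simple_graph V E \<Longrightarrow> e \<in> E \<Longrightarrow> x \<in> e \<Longrightarrow> x \<in> V"
  unfolding simple_graph_def by fastforce

lemma edge_j:
  assumes sg: "simple_graph V E" and fm: "face_matching V E m"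
    and dc: "is_dcycle (reversed_arcs V E m) ys" and v0: "isV (ys!0)"
    and k: "length ys = 2*k" and j: "j < k"
  shows "\<exists>a b e. ys!(2*j) = FVert a \<and> ys!(2*j+1) = FEdge e \<and> ys!(2*(Suc j mod k)) = FVert b
          \<and> e = {a,b} \<and> a \<noteq> b \<and> e \<in> E"
proof -
  let ?A = "reversed_arcs V E m"
  have "isV (ys!(2*j))" using dc_alt(1)[OF fm dc v0, of "2*j"] k j by simp
  then obtain a where a: "ys!(2*j) = FVert a" by (cases "ys!(2*j)") (auto simp: isV_def)
  have "Suc (2*j) mod length ys = 2*j+1" using k j by simp
  then have "(ys!(2*j), ys!(2*j+1)) \<in> ?A" using dc_arc[OF dc, of "2*j"] k j by simp
  then obtain e where e: "ys!(2*j+1) = FEdge e" "(FEdge e, FVert a) \<in> m" using A_FVert[OF fm] a by metis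
  have "Suc (2*j+1) mod length ys = 2*(Suc j mod k)" using k by (simp add: mult_mod_right)
  then have "(ys!(2*j+1), ys!(2*(Suc j mod k))) \<in> ?A" using dc_arc[OF dc, of "2*j+1"] k j by simp
  then obtain b where b: "ys!(2*(Suc j mod k)) = FVert b" "e \<in> E" "b \<in> e" "(FEdge e, FVert b) \<notin> m"
    using A_FEdge[OF fm] e by metis
  have ae: "a \<in> e" using m_sub[OF fm e(2)] by (auto simp: fa_mem)
  have ab: "a \<noteq> b" using b(4) e(2) by auto
  obtain u w where "e = {u,w}" using sg b(2) unfolding simple_graph_def by blast
  then have "e = {a,b}" using ae b(3) ab by auto
  then show ?thesis using a e b ab by blast
qed

lemma extract_cyc:
  assumes sg: "simple_graph V E" and fm: "face_matching V E m"
    and dc0: "is_dcycle (reversed_arcs V E m) xs"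
  shows "\<exists>vs. graph_cycle V E vs \<and> (\<forall>v\<in>set vs. FVert v \<in> set xs)"
proof -
  obtain ys where dc: "is_dcycle (reversed_arcs V E m) ys" and sy: "set ys = set xs" and v0: "isV (ys!0)"
    using dc_startV[OF fm dc0] by blast
  obtain k where k: "length ys = 2*k" using dc_alt(2)[OF fm dc v0] by (metis evenE)
  have "ys \<noteq> []" using dc unfolding is_dcycle_def by auto
  then have k0: "k > 0" using k by (cases k) auto
  define vs where "vs = map (\<lambda>j. vof (ys!(2*j))) [0..<k]"
  have lvs: "length vs = k" unfolding vs_def by simp
  have vsj: "ys!(2*j) = FVert (vs!j)" if "j < k" for j
    using edge_j[OF sg fm dc v0 k that] that unfolding vs_def by auto
  have dys: "distinct ys" using dc unfolding is_dcycle_def by simp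
  have edges: "{vs!j, vs!(Suc j mod k)} \<in> E \<and> vs!j \<noteq> vs!(Suc j mod k) \<and> ys!(2*j+1) = FEdge {vs!j, vs!(Suc j mod k)}"
    if "j < k" for j
  proof -
    have "Suc j mod k < k" using k0 by simp
    then show ?thesis using edge_j[OF sg fm dc v0 k that] vsj[OF that] vsj[of "Suc j mod k"] by auto
  qed
  have dvs: "distinct vs"
  proof (unfold distinct_conv_nth, intro allI impI)
    fix i j assume "i < length vs" "j < length vs" "i \<noteq> j"
    then have "ys!(2*i) \<noteq> ys!(2*j)" using dys k lvs by (simp add: distinct_conv_nth)
    then show "vs!i \<noteq> vs!j" using vsj `i < length vs` `j < length vs` lvs by auto
  qed
  have "k \<noteq> 1" using edges[of 0] by auto
  moreover have "k \<noteq> 2"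
  proof
    assume k2: "k = 2"
    have "ys!1 = ys!3" using edges[of 0] edges[of 1] k2 by (simp add: insert_commute)
    moreover have "(1::nat) < length ys" "(3::nat) < length ys" using k k2 by auto
    ultimately show False using dys by (simp add: distinct_conv_nth)
  qed
  ultimately have k3: "k \<ge> 3" using k0 by linarith
  have sub: "\<forall>v\<in>set vs. FVert v \<in> set xs"
  proof
    fix v assume "v \<in> set vs"
    then obtain j where "j < k" "v = vs!j" using lvs by (auto simp: in_set_conv_nth)
    moreover have "2*j < length ys" using `j < k` k by simp
    ultimately show "FVert v \<in> set xs" using vsj[of j] sy nth_mem[of "2*j" ys] by simp
  qed
  have inV: "set vs \<subseteq> V"
  proof
    fix v assume "v \<in> set vs"
    then obtain j where j: "j < k" "v = vs!j" using lvs by (auto simp: in_set_conv_nth)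
    then have "{v, vs!(Suc j mod k)} \<in> E" using edges by auto
    then show "v \<in> V" using edge_in_V[OF sg] by blast
  qed
  have "graph_cycle V E vs" unfolding graph_cycle_def using k3 dvs inV edges lvs by simp
  then show ?thesis using sub by blast
qed



lemma finite_V: "simple_graph V E \<Longrightarrow> finite V" unfolding simple_graph_def by simp
lemma finite_E: "simple_graph V E \<Longrightarrow> finite E"
proof -
  assume sg: "simple_graph V E"
  then have "E \<subseteq> Pow V" using edge_in_V[OF sg] by blast
  then show ?thesis using finite_V[OF sg] by (meson finite_Pow_iff finite_subset)
qed
lemma finite_fa: "simple_graph V E \<Longrightarrow> finite (face_arcs V E)"
proof -
  assume sg: "simple_graph V E"
  have "face_arcs V E \<subseteq> (FEdge ` E) \<times> (FVert ` V)"
    unfolding face_arcs_def using edge_in_V[OF sg] by blast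
  moreover have "finite V" using finite_V[OF sg] .
  ultimately show ?thesis using finite_E[OF sg] by (meson finite_SigmaI finite_imageI finite_subset)
qed

lemma finite_C:
  assumes sg: "simple_graph V E" and fm: "face_matching V E m"
  shows "finite {cycle_arcs xs | xs. is_dcycle (reversed_arcs V E m) xs}"
proof -
  have "reversed_arcs V E m \<subseteq> face_arcs V E \<union> converse (face_arcs V E)"
    using m_sub[OF fm] unfolding reversed_arcs_def by auto
  then have f: "finite (reversed_arcs V E m)" using finite_fa[OF sg] by (meson finite_Un finite_converse finite_subset)
  have "{cycle_arcs xs | xs. is_dcycle (reversed_arcs V E m) xs} \<subseteq> Pow (reversed_arcs V E m)"
    using dc_arc unfolding cycle_arcs_def by blast
  then show ?thesis using f by (meson finite_Pow_iff finite_subset)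
qed

lemma disj_bound:
  assumes sg: "simple_graph V E" and gc: "\<forall>c\<in>set cs. graph_cycle V E c"
    and dj: "\<forall>i < k. \<forall>j < k. i \<noteq> j \<longrightarrow> set (cs ! i) \<inter> set (cs ! j) = {}" and k: "length cs = k"
  shows "k \<le> card V"
proof -
  have ne: "cs!i \<noteq> []" if "i < k" for i
  proof -
    have "graph_cycle V E (cs!i)" using gc k that by simp
    then show ?thesis unfolding graph_cycle_def by auto
  qed
  have inj: "inj_on (\<lambda>i. hd (cs!i)) {..<k}"
  proof (rule inj_onI)
    fix i j assume "i \<in> {..<k}" "j \<in> {..<k}" "hd (cs!i) = hd (cs!j)"
    then have i: "i < k" "j < k" and e: "hd (cs!i) = hd (cs!j)" by auto
    show "i = j"
    proof (rule ccontr)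
      assume "i \<noteq> j"
      then have "set (cs ! i) \<inter> set (cs ! j) = {}" using dj i by blast
      moreover have "hd (cs!i) \<in> set (cs!i)" "hd (cs!j) \<in> set (cs!j)" using ne i hd_in_set by blast+
      ultimately show False using e by auto
    qed
  qed
  have "(\<lambda>i. hd (cs!i)) ` {..<k} \<subseteq> V"
  proof
    fix x assume "x \<in> (\<lambda>i. hd (cs!i)) ` {..<k}"
    then obtain i where i: "i < k" "x = hd (cs!i)" by auto
    then have "x \<in> set (cs!i)" using ne hd_in_set by blast
    moreover have "graph_cycle V E (cs!i)" using gc i k by simp
    ultimately show "x \<in> V" unfolding graph_cycle_def by blast
  qed
  moreover have "finite V" using finite_V[OF sg] .
  ultimately show ?thesis using card_inj_on_le[OF inj] by fastforce
qed

definition Sset :: "'a set \<Rightarrow> 'a set set \<Rightarrow> nat set" where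
  "Sset V E = {k. \<exists>cs. length cs = k \<and> (\<forall>c\<in>set cs. graph_cycle V E c) \<and>
      (\<forall>i < k. \<forall>j < k. i \<noteq> j \<longrightarrow> set (cs ! i) \<inter> set (cs ! j) = {})}"

lemma mdc_eq: "max_disjoint_cycles V E = Max (Sset V E)"
  unfolding max_disjoint_cycles_def Sset_def by simp

lemma finite_S: "simple_graph V E \<Longrightarrow> finite (Sset V E)"
proof -
  assume sg: "simple_graph V E"
  have "Sset V E \<subseteq> {..card V}" unfolding Sset_def using disj_bound[OF sg] by auto
  then show ?thesis using finite_subset by blast
qed

lemma zero_S: "0 \<in> Sset V E"
  unfolding Sset_def by (rule CollectI, rule exI[of _ "[]"]) simp

lemma upper:
  assumes sg: "simple_graph V E" and fm: "face_matching V E m"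
  shows "J V E m \<le> max_disjoint_cycles V E"
proof -
  let ?A = "reversed_arcs V E m"
  let ?C = "{cycle_arcs xs | xs. is_dcycle ?A xs}"
  have det: "det_rel ?A" unfolding det_rel_def using A_det[OF sg fm] by blast
  obtain L where L: "distinct L" "set L = ?C" using finite_distinct_list[OF finite_C[OF sg fm]] by blast
  define g where "g c = (SOME xs. is_dcycle ?A xs \<and> cycle_arcs xs = c)" for c
  define h where "h c = (SOME vs. graph_cycle V E vs \<and> (\<forall>v\<in>set vs. FVert v \<in> set (g c)))" for c
  have g: "is_dcycle ?A (g c) \<and> cycle_arcs (g c) = c" if cC: "c \<in> ?C" for c
  proof -
    obtain xs where "is_dcycle ?A xs \<and> cycle_arcs xs = c" using cC by blast
    then show ?thesis unfolding g_def by (rule someI)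
  qed
  have h: "graph_cycle V E (h c) \<and> (\<forall>v\<in>set (h c). FVert v \<in> set (g c))" if "c \<in> ?C" for c
  proof -
    have "\<exists>vs. graph_cycle V E vs \<and> (\<forall>v\<in>set vs. FVert v \<in> set (g c))"
      using extract_cyc[OF sg fm] g[OF that] by blast
    then show ?thesis unfolding h_def by (rule someI_ex)
  qed
  define cs where "cs = map h L"
  have lcs: "length cs = card ?C" unfolding cs_def using L distinct_card by fastforce
  have gcs: "\<forall>c\<in>set cs. graph_cycle V E c" unfolding cs_def using h L(2) by auto
  have djs: "\<forall>i < length cs. \<forall>j < length cs. i \<noteq> j \<longrightarrow> set (cs ! i) \<inter> set (cs ! j) = {}"
  proof (intro allI impI)
    fix i j assume ij: "i < length cs" "j < length cs" "i \<noteq> j"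
    have Li: "L!i \<in> ?C" "L!j \<in> ?C" using ij L(2) unfolding cs_def by (auto intro: nth_mem)
    have neq: "L!i \<noteq> L!j" using L(1) ij unfolding cs_def by (simp add: nth_eq_iff_index_eq)
    show "set (cs ! i) \<inter> set (cs ! j) = {}"
    proof (rule ccontr)
      assume "set (cs ! i) \<inter> set (cs ! j) \<noteq> {}"
      then obtain v where "v \<in> set (h (L!i))" "v \<in> set (h (L!j))" using ij unfolding cs_def by auto
      then have "FVert v \<in> set (g (L!i))" "FVert v \<in> set (g (L!j))" using h Li by blast+
      then have "cycle_arcs (g (L!i)) = cycle_arcs (g (L!j))"
        using dc_same[OF det, of "g (L!i)" "g (L!j)" "FVert v"] g[OF Li(1)] g[OF Li(2)] by blast
      then show False using g Li neq by simp
    qed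
  qed
  have "card ?C \<in> Sset V E" unfolding Sset_def using lcs gcs djs by auto
  then have "card ?C \<le> Max (Sset V E)" using finite_S[OF sg] by simp
  then show ?thesis unfolding J_def mdc_eq .
qed




definition ed :: "'a list \<Rightarrow> nat \<Rightarrow> 'a set" where
  "ed c i = {c!i, c!(Suc i mod length c)}"

lemma suc_mod_ne: "n \<ge> 2 \<Longrightarrow> i < n \<Longrightarrow> Suc i mod n \<noteq> i"
  by (cases "Suc i < n") (auto simp: mod_if)

lemma suc2_mod_ne: assumes "n \<ge> 3" "i < n" shows "Suc (Suc i mod n) mod n \<noteq> i"
proof (cases "Suc i < n")
  case True
  then show ?thesis using assms by (cases "Suc (Suc i) < n") (auto simp: mod_if)
next
  case False
  then have "Suc i = n" using assms by simp
  then show ?thesis using assms by (auto simp: mod_if)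
qed

lemma gc_props:
  assumes "graph_cycle V E c"
  shows "length c \<ge> 3" "distinct c" "\<And>i. i < length c \<Longrightarrow> ed c i \<in> E"
  using assms unfolding graph_cycle_def ed_def by auto

lemma ed_inj:
  assumes gc: "graph_cycle V E c" and i: "i < length c" "i' < length c" and e: "ed c i = ed c i'"
  shows "i = i'"
proof -
  let ?n = "length c"
  have n3: "?n \<ge> 3" and d: "distinct c" using gc_props[OF gc] by auto
  have "?n > 0" using n3 by linarith
  then have si: "Suc i mod ?n < ?n" "Suc i' mod ?n < ?n" by auto
  have nth_inj: "\<And>a b. a < ?n \<Longrightarrow> b < ?n \<Longrightarrow> c!a = c!b \<Longrightarrow> a = b" using d by (simp add: nth_eq_iff_index_eq)
  have "c!i \<in> ed c i'" using e unfolding ed_def by auto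
  then have "c!i = c!i' \<or> c!i = c!(Suc i' mod ?n)" unfolding ed_def by auto
  then show ?thesis
  proof
    assume "c!i = c!i'" then show ?thesis using nth_inj i by blast
  next
    assume a: "c!i = c!(Suc i' mod ?n)"
    then have ii: "i = Suc i' mod ?n" using nth_inj i si by blast
    have "c!(Suc i mod ?n) \<in> ed c i'" using e unfolding ed_def by auto
    then have "c!(Suc i mod ?n) = c!i' \<or> c!(Suc i mod ?n) = c!(Suc i' mod ?n)" unfolding ed_def by auto
    then show ?thesis
    proof
      assume "c!(Suc i mod ?n) = c!i'"
      then have "Suc i mod ?n = i'" using nth_inj i si by blast
      then have "Suc (Suc i' mod ?n) mod ?n = i'" using ii by simp
      then show ?thesis using suc2_mod_ne[OF n3 i(2)] by blast
    next
      assume "c!(Suc i mod ?n) = c!(Suc i' mod ?n)"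
      then have "Suc i mod ?n = i" using a nth_inj i si by metis
      then show ?thesis using suc_mod_ne[of ?n i] n3 i by simp
    qed
  qed
qed




definition gg :: "'a list \<Rightarrow> nat \<Rightarrow> 'a face" where
  "gg c j = (if even j then FVert (c!(j div 2)) else FEdge (ed c (j div 2)))"

definition xsc :: "'a list \<Rightarrow> 'a face list" where
  "xsc c = map (gg c) [0..<2*length c]"

lemma ed_sub: "i < length c \<Longrightarrow> ed c i \<subseteq> set c"
proof -
  assume i: "i < length c"
  then have "length c > 0" by linarith
  then have "Suc i mod length c < length c" by simp
  then show ?thesis using i unfolding ed_def by auto
qed

lemma lower:
  assumes sg: "simple_graph V E" and gcs: "\<forall>c\<in>set cs. graph_cycle V E c"
    and dj: "\<forall>i < k. \<forall>j < k. i \<noteq> j \<longrightarrow> set (cs ! i) \<inter> set (cs ! j) = {}"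
    and lk: "length cs = k" and k0: "k > 0"
  shows "\<exists>m. face_matching V E m \<and> m \<noteq> {} \<and> k \<le> J V E m"
proof -
  have same_c: "c = c'" if pr: "c \<in> set cs" "c' \<in> set cs" "x \<in> set c" "x \<in> set c'" for c c' x
  proof -
    obtain a where "a < k" "c = cs!a" using pr(1) lk by (auto simp: in_set_conv_nth)
    moreover obtain b where "b < k" "c' = cs!b" using pr(2) lk by (auto simp: in_set_conv_nth)
    ultimately show ?thesis using dj pr by blast
  qed
  define m where "m = {(FEdge (ed c i), FVert (c!i)) | c i. c \<in> set cs \<and> i < length c}"
  have nth_inj: "i = i'" if "c \<in> set cs" "i < length c" "i' < length c" "c!i = c!i'" for c i i'
    using that gc_props(2) gcs by (metis nth_eq_iff_index_eq)
  have fm: "face_matching V E m"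
    unfolding face_matching_def
  proof (intro conjI ballI impI)
    show "m \<subseteq> face_arcs V E"
    proof
      fix a assume "a \<in> m"
      then obtain c i where "a = (FEdge (ed c i), FVert (c!i))" "c \<in> set cs" "i < length c" unfolding m_def by blast
      moreover have "ed c i \<in> E" using gc_props(3) gcs calculation(2,3) by blast
      ultimately show "a \<in> face_arcs V E" by (simp add: fa_mem ed_def)
    qed
  next
    fix a b assume "a \<in> m" "b \<in> m" "a \<noteq> b"
    then obtain c i c' i' where a: "a = (FEdge (ed c i), FVert (c!i))" "c \<in> set cs" "i < length c"
      and b: "b = (FEdge (ed c' i'), FVert (c'!i'))" "c' \<in> set cs" "i' < length c'" unfolding m_def by blast
    have v: "c!i \<noteq> c'!i'"
    proof
      assume e: "c!i = c'!i'"
      have "c!i \<in> set c" using a(3) by simp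
      moreover have "c'!i' \<in> set c'" using b(3) by simp
      ultimately have "c!i \<in> set c" "c!i \<in> set c'" using e by simp_all
      then have "c = c'" using same_c[of c c' "c!i"] a b by blast
      then show False using e nth_inj a b `a \<noteq> b` by blast
    qed
    have w: "ed c i \<noteq> ed c' i'"
    proof
      assume e: "ed c i = ed c' i'"
      have "c!i \<in> ed c i" unfolding ed_def by simp
      then have "c!i \<in> set c'" using e ed_sub[OF b(3)] by blast
      moreover have "c!i \<in> set c" using a(3) by simp
      ultimately have "c = c'" using same_c[of c c' "c!i"] a b by blast
      then show False using e ed_inj[of V E c i i'] gcs a b `a \<noteq> b` by blast
    qed
    show "{fst a, snd a} \<inter> {fst b, snd b} = {}" using a(1) b(1) v w by auto
  qed
  let ?A = "reversed_arcs V E m"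
  have dcyc: "is_dcycle ?A (xsc c)" if cS: "c \<in> set cs" for c
  proof -
    let ?n = "length c"
    have gc: "graph_cycle V E c" using gcs cS by blast
    have n3: "?n \<ge> 3" and dc: "distinct c" using gc_props[OF gc] by auto
    have n0: "?n > 0" using n3 by linarith
    have lx: "length (xsc c) = 2 * ?n" unfolding xsc_def by simp
    have xn: "xsc c ! j = gg c j" if "j < 2 * ?n" for j unfolding xsc_def using that by simp
    have inj: "inj_on (gg c) {0..<2*?n}"
    proof (rule inj_onI)
      fix j j' assume j: "j \<in> {0..<2*?n}" "j' \<in> {0..<2*?n}" "gg c j = gg c j'"
      have jd: "j div 2 < ?n" "j' div 2 < ?n" using j by auto
      show "j = j'"
      proof (cases "even j")
        case True
        then have "even j'" using j(3) unfolding gg_def by (auto split: if_splits)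
        then have "c!(j div 2) = c!(j' div 2)" using True j(3) unfolding gg_def by simp
        then have "j div 2 = j' div 2" using nth_inj[OF cS jd] by blast
        then show ?thesis using True `even j'` by (metis dvd_mult_div_cancel)
      next
        case False
        then have "odd j'" using j(3) unfolding gg_def by (auto split: if_splits)
        then have "ed c (j div 2) = ed c (j' div 2)" using False j(3) unfolding gg_def by simp
        then have "j div 2 = j' div 2" using ed_inj[OF gc jd] by blast
        then show ?thesis using False `odd j'` by (metis odd_two_times_div_two_succ)
      qed
    qed
    have dist: "distinct (xsc c)" unfolding xsc_def using inj by (simp add: distinct_map)
    have arcs: "(xsc c ! j, xsc c ! (Suc j mod length (xsc c))) \<in> ?A" if j: "j < length (xsc c)" for j
    proof (cases "even j")
      case True
      then obtain i where i: "j = 2*i" by blast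
      have "i < ?n" using j lx i by simp
      have "Suc j mod length (xsc c) = Suc j" using j lx i by simp
      moreover have "xsc c ! j = FVert (c!i)" using xn[of j] j lx i unfolding gg_def by simp
      moreover have "xsc c ! Suc j = FEdge (ed c i)" using xn[of "Suc j"] j lx i unfolding gg_def by simp
      moreover have "(FEdge (ed c i), FVert (c!i)) \<in> m" unfolding m_def using cS `i < ?n` by blast
      ultimately show ?thesis by (simp add: revA)
    next
      case False
      then obtain i where i: "j = 2*i+1" using oddE by blast
      have iN: "i < ?n" using j lx i by simp
      have "Suc j mod length (xsc c) = 2 * (Suc i mod ?n)" using lx i by (simp add: mult_mod_right)
      moreover have "Suc i mod ?n < ?n" using n0 by simp
      ultimately have "xsc c ! (Suc j mod length (xsc c)) = FVert (c!(Suc i mod ?n))"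
        using xn[of "2 * (Suc i mod ?n)"] unfolding gg_def by simp
      moreover have "xsc c ! j = FEdge (ed c i)" using xn[of j] j lx i unfolding gg_def by simp
      moreover have "(FEdge (ed c i), FVert (c!(Suc i mod ?n))) \<in> face_arcs V E"
        using gc_props(3)[OF gc iN] by (simp add: fa_mem ed_def)
      moreover have "(FEdge (ed c i), FVert (c!(Suc i mod ?n))) \<notin> m"
      proof
        assume in1: "(FEdge (ed c i), FVert (c!(Suc i mod ?n))) \<in> m"
        have in2: "(FEdge (ed c i), FVert (c!i)) \<in> m" unfolding m_def using cS iN by blast
        have "c!(Suc i mod ?n) = c!i" using m_unique[OF fm in1 in2] by simp
        then have "Suc i mod ?n = i" using nth_inj[OF cS `Suc i mod ?n < ?n` iN] by blast
        then show False using suc_mod_ne[of ?n i] n3 iN by simp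
      qed
      ultimately show ?thesis by (simp add: revA)
    qed
    show ?thesis unfolding is_dcycle_def using dist arcs lx n0 by auto
  qed
  have fvx: "v \<in> set c" if pr: "FVert v \<in> set (xsc c)" for v c
  proof -
    obtain j where j: "j < 2 * length c" "gg c j = FVert v" using pr unfolding xsc_def by auto
    then have "even j" "v = c!(j div 2)" unfolding gg_def by (auto split: if_splits)
    moreover have "j div 2 < length c" using j by auto
    ultimately show ?thesis by simp
  qed
  let ?C = "{cycle_arcs xs | xs. is_dcycle ?A xs}"
  have sub: "(\<lambda>c. cycle_arcs (xsc c)) ` set cs \<subseteq> ?C" using dcyc by blast
  have injc: "inj_on (\<lambda>c. cycle_arcs (xsc c)) (set cs)"
  proof (rule inj_onI)
    fix c c' assume c: "c \<in> set cs" "c' \<in> set cs" "cycle_arcs (xsc c) = cycle_arcs (xsc c')"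
    have n: "length c \<ge> 3" using gc_props(1) gcs c by blast
    then have n0: "length c > 0" by linarith
    then have l: "0 < length (xsc c)" unfolding xsc_def by simp
    have x0: "xsc c ! 0 = FVert (c!0)" using l unfolding xsc_def gg_def by simp
    have "(xsc c ! 0, xsc c ! (Suc 0 mod length (xsc c))) \<in> cycle_arcs (xsc c)"
      unfolding cycle_arcs_def using l by blast
    then have "(xsc c ! 0, xsc c ! (Suc 0 mod length (xsc c))) \<in> cycle_arcs (xsc c')" using c by simp
    then have "FVert (c!0) \<in> set (xsc c')" unfolding cycle_arcs_def x0 by (auto intro: nth_mem)
    then have "c!0 \<in> set c'" by (rule fvx)
    moreover have "c!0 \<in> set c" using n0 by simp
    ultimately show "c = c'" using same_c c by blast
  qed
  have dcs: "distinct cs"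
  proof (unfold distinct_conv_nth, intro allI impI)
    fix i j assume ij: "i < length cs" "j < length cs" "i \<noteq> j"
    then have "set (cs!i) \<inter> set (cs!j) = {}" using dj lk by blast
    moreover have "cs!i \<noteq> []" using gc_props(1) gcs ij(1) by (metis list.size(3) not_numeral_le_zero nth_mem)
    ultimately show "cs!i \<noteq> cs!j" by auto
  qed
  have "k = card ((\<lambda>c. cycle_arcs (xsc c)) ` set cs)" using card_image[OF injc] distinct_card[OF dcs] lk by simp
  also have "\<dots> \<le> card ?C" using card_mono[OF finite_C[OF sg fm] sub] .
  finally have "k \<le> J V E m" unfolding J_def .
  moreover have "m \<noteq> {}"
  proof -
    have c0: "cs!0 \<in> set cs" using lk k0 by simp
    then have "length (cs!0) > 0" using gc_props(1) gcs by fastforce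
    then show ?thesis unfolding m_def using c0 by blast
  qed
  ultimately show ?thesis using fm by blast
qed




theorem mainTheorem4:
  fixes V :: "'a set" and E :: "'a set set"
  assumes "simple_graph V E"
  shows "eta V E = max_disjoint_cycles V E"
proof -
  note sg = assms
  let ?P = "\<lambda>k. \<forall>m. face_matching V E m \<and> m \<noteq> {} \<longrightarrow> J V E m \<le> k"
  let ?M = "max_disjoint_cycles V E"
  have PM: "?P ?M" using upper[OF sg] by blast
  have le: "eta V E \<le> ?M" unfolding eta_def using PM by (rule Least_le)
  have Pe: "?P (eta V E)" unfolding eta_def using PM by (rule LeastI)
  have ge: "?M \<le> eta V E"
  proof (cases "?M = 0")
    case True then show ?thesis by simp
  next
    case False
    have "?M \<in> Sset V E" unfolding mdc_eq
      using Max_in[OF finite_S[OF sg]] zero_S[of V E] by blast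
    then obtain cs where cs: "length cs = ?M" "\<forall>c\<in>set cs. graph_cycle V E c"
      "\<forall>i < ?M. \<forall>j < ?M. i \<noteq> j \<longrightarrow> set (cs ! i) \<inter> set (cs ! j) = {}"
      unfolding Sset_def by blast
    obtain m where "face_matching V E m" "m \<noteq> {}" "?M \<le> J V E m"
      using lower[OF sg cs(2) cs(3) cs(1)] False by blast
    then show ?thesis using Pe by fastforce
  qed
  show ?thesis using le ge by simp
qed


end
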